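(* For every $n$, $F_{\wedge,\to}(n)\cong\mathcal U(U(n)_{\wedge,\to})$ as implicative meet-semilattices.
   Context: $F_{\wedge,\to}(n)$ is the free implicative meet-semilattice on $p_1,\dots,p_n$ (the $(\wedge,\to)$-formulas in $p_1,\dots,p_n$ modulo IPC-equivalence). $\mathcal U(X)$ is the Heyting algebra of up-sets of a poset $X$. Models are posets with order-preserving colouring $c:M\to\{0,1\}^n$ and intuitionistic Kripke semantics ($x\models p_i$ iff $c(x)_i=1$). A point $x$ is separated if for some variable $q$, $x\not\models q$ but all $y>x$ satisfy $q$; $M^s$ is the set of separated points with restricted order and colouring. $U(n)$ is the $n$-universal model: the generated submodel of the canonical model of IPC on $p_1,\dots,p_n$ (prime filters of the free Heyting algebra ordered by inclusion, $c(x)_i=1$ iff $p_i\in x$) consisting of points with finite up-set. For every model of finite depth there is a unique p-morphism into $U(n)$; $U(n)_{\wedge,\to}$ is the image of the unique p-morphism $U(n)^s\to U(n)$. *)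

theory Defs
  imports Main
begin

text \<open>Variables p_1,...,p_n are represented as Var 0, ..., Var (n-1).\<close>

datatype fm = Var nat | Top | Bot | And fm fm | Or fm fm | Imp fm fm

inductive prv :: "fm \<Rightarrow> bool" where
  ax_top: "prv Top"
| ax_k: "prv (Imp A (Imp B A))"
| ax_s: "prv (Imp (Imp A (Imp B C)) (Imp (Imp A B) (Imp A C)))"
| ax_and1: "prv (Imp (And A B) A)"
| ax_and2: "prv (Imp (And A B) B)"
| ax_andI: "prv (Imp A (Imp B (And A B)))"
| ax_or1: "prv (Imp A (Or A B))"
| ax_or2: "prv (Imp B (Or A B))"
| ax_orE: "prv (Imp (Imp A C) (Imp (Imp B C) (Imp (Or A B) C)))"
| ax_bot: "prv (Imp Bot A)"
| mp: "prv (Imp A B) \<Longrightarrow> prv A \<Longrightarrow> prv B"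

definition ipc_equiv :: "fm \<Rightarrow> fm \<Rightarrow> bool" where
  "ipc_equiv A B \<longleftrightarrow> prv (Imp A B) \<and> prv (Imp B A)"

fun vars :: "fm \<Rightarrow> nat set" where
  "vars (Var i) = {i}"
| "vars Top = {}"
| "vars Bot = {}"
| "vars (And A B) = vars A \<union> vars B"
| "vars (Or A B) = vars A \<union> vars B"
| "vars (Imp A B) = vars A \<union> vars B"

text \<open>(\<and>,\<rightarrow>)-formulas (with the constant top of implicative meet-semilattices).\<close>
fun conj_imp :: "fm \<Rightarrow> bool" where
  "conj_imp (Var i) = True"
| "conj_imp Top = True"
| "conj_imp Bot = False"
| "conj_imp (And A B) = (conj_imp A \<and> conj_imp B)"
| "conj_imp (Or A B) = False"
| "conj_imp (Imp A B) = (conj_imp A \<and> conj_imp B)"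

definition Fm :: "nat \<Rightarrow> fm set" where
  "Fm n = {A. vars A \<subseteq> {..<n}}"

definition IFm :: "nat \<Rightarrow> fm set" where
  "IFm n = {A. vars A \<subseteq> {..<n} \<and> conj_imp A}"

definition cls :: "nat \<Rightarrow> fm \<Rightarrow> fm set" where
  "cls n A = {B \<in> Fm n. ipc_equiv A B}"

definition lind :: "nat \<Rightarrow> fm set set" where
  "lind n = cls n ` Fm n"

definition lind_le :: "fm set \<Rightarrow> fm set \<Rightarrow> bool" where
  "lind_le a b \<longleftrightarrow> (\<exists>A\<in>a. \<exists>B\<in>b. prv (Imp A B))"

definition prime_filter :: "nat \<Rightarrow> fm set set \<Rightarrow> bool" where
  "prime_filter n F \<longleftrightarrow>
     F \<subseteq> lind n \<and>
     cls n Top \<in> F \<and>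
     cls n Bot \<notin> F \<and>
     (\<forall>a\<in>F. \<forall>b\<in>lind n. lind_le a b \<longrightarrow> b \<in> F) \<and>
     (\<forall>A\<in>Fm n. \<forall>B\<in>Fm n. cls n A \<in> F \<and> cls n B \<in> F \<longrightarrow> cls n (And A B) \<in> F) \<and>
     (\<forall>A\<in>Fm n. \<forall>B\<in>Fm n. cls n (Or A B) \<in> F \<longrightarrow> cls n A \<in> F \<or> cls n B \<in> F)"

text \<open>A model is given by a carrier set W, an order le, and a colouring
  c, where c x i stands for c(x)_i = 1 (only i < n is relevant).\<close>

definition p_morphism ::
  "nat \<Rightarrow> 'a set \<Rightarrow> ('a \<Rightarrow> 'a \<Rightarrow> bool) \<Rightarrow> ('a \<Rightarrow> nat \<Rightarrow> bool) \<Rightarrow>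
   'b set \<Rightarrow> ('b \<Rightarrow> 'b \<Rightarrow> bool) \<Rightarrow> ('b \<Rightarrow> nat \<Rightarrow> bool) \<Rightarrow> ('a \<Rightarrow> 'b) \<Rightarrow> bool" where
  "p_morphism n M leM cM N leN cN f \<longleftrightarrow>
     (\<forall>x\<in>M. f x \<in> N) \<and>
     (\<forall>x\<in>M. \<forall>y\<in>M. leM x y \<longrightarrow> leN (f x) (f y)) \<and>
     (\<forall>x\<in>M. \<forall>z\<in>N. leN (f x) z \<longrightarrow> (\<exists>y\<in>M. leM x y \<and> f y = z)) \<and>
     (\<forall>x\<in>M. \<forall>i<n. cN (f x) i = cM x i)"

definition separated_points ::
  "nat \<Rightarrow> 'a set \<Rightarrow> ('a \<Rightarrow> 'a \<Rightarrow> bool) \<Rightarrow> ('a \<Rightarrow> nat \<Rightarrow> bool) \<Rightarrow> 'a set" where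
  "separated_points n M le c =
     {x\<in>M. \<exists>q<n. \<not> c x q \<and> (\<forall>y\<in>M. le x y \<and> x \<noteq> y \<longrightarrow> c y q)}"

text \<open>Points of the canonical model: prime filters, ordered by inclusion;
  the colouring: c(x)_i = 1 iff p_i \<in> x.\<close>

definition canon_col :: "nat \<Rightarrow> fm set set \<Rightarrow> nat \<Rightarrow> bool" where
  "canon_col n x i \<longleftrightarrow> cls n (Var i) \<in> x"

definition univ_model :: "nat \<Rightarrow> fm set set set" where
  "univ_model n = {x. prime_filter n x \<and> finite {y. prime_filter n y \<and> x \<subseteq> y}}"

text \<open>U(n)_{\<and>,\<rightarrow>}: image of the (unique) p-morphism U(n)^s \<rightarrow> U(n).\<close>
definition univ_ci :: "nat \<Rightarrow> fm set set set" where
  "univ_ci n = \<Union>{f ` separated_points n (univ_model n) (\<subseteq>) (canon_col n) | f.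
       p_morphism n (separated_points n (univ_model n) (\<subseteq>) (canon_col n)) (\<subseteq>) (canon_col n)
                    (univ_model n) (\<subseteq>) (canon_col n) f}"

definition upsets :: "'a set \<Rightarrow> ('a \<Rightarrow> 'a \<Rightarrow> bool) \<Rightarrow> 'a set set" where
  "upsets X le = {A. A \<subseteq> X \<and> (\<forall>x\<in>A. \<forall>y\<in>X. le x y \<longrightarrow> y \<in> A)}"

definition up_imp :: "'a set \<Rightarrow> ('a \<Rightarrow> 'a \<Rightarrow> bool) \<Rightarrow> 'a set \<Rightarrow> 'a set \<Rightarrow> 'a set" where
  "up_imp X le A B = {x\<in>X. \<forall>y\<in>X. le x y \<longrightarrow> y \<in> A \<longrightarrow> y \<in> B}"

end

theory Submission
  imports Defs
begin

section \<open>Hilbert toolkit\<close>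

lemma prv_I: "prv (Imp A A)"
  by (meson ax_k ax_s mp)

lemma prv_K: "prv X \<Longrightarrow> prv (Imp G X)"
  by (meson ax_k mp)

lemma prv_S: "prv (Imp G (Imp X Y)) \<Longrightarrow> prv (Imp G X) \<Longrightarrow> prv (Imp G Y)"
  by (meson ax_s mp)

lemma prv_trans: "prv (Imp G X) \<Longrightarrow> prv (Imp X Y) \<Longrightarrow> prv (Imp G Y)"
  by (meson prv_K prv_S)

lemma prv_andI: "prv (Imp G X) \<Longrightarrow> prv (Imp G Y) \<Longrightarrow> prv (Imp G (And X Y))"
  by (meson ax_andI prv_K prv_S)

lemma prv_and1: "prv (Imp G (And X Y)) \<Longrightarrow> prv (Imp G X)"
  by (meson ax_and1 prv_trans)

lemma prv_and2: "prv (Imp G (And X Y)) \<Longrightarrow> prv (Imp G Y)"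
  by (meson ax_and2 prv_trans)

lemma prv_imp_comp: "prv (Imp X E) \<Longrightarrow> prv (Imp (Imp D X) (Imp D E))"
  by (meson ax_s prv_K mp)

lemma prv_curry: "prv (Imp (And G D) E) \<Longrightarrow> prv (Imp G (Imp D E))"
  by (meson ax_andI prv_imp_comp prv_trans)

lemma prv_uncurry: "prv (Imp G (Imp D E)) \<Longrightarrow> prv (Imp (And G D) E)"
  by (meson ax_and1 ax_and2 prv_S prv_trans)

lemma prv_mp: "prv (Imp X Y) \<Longrightarrow> prv X \<Longrightarrow> prv Y" by (rule mp)

fun conjl :: "fm list \<Rightarrow> fm" where
  "conjl [] = Top"
| "conjl (x # xs) = And x (conjl xs)"

fun disjl :: "fm list \<Rightarrow> fm" where
  "disjl [] = Bot"
| "disjl (x # xs) = Or x (disjl xs)"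

lemma prv_conjl_elem: "x \<in> set xs \<Longrightarrow> prv (Imp (conjl xs) x)"
proof (induction xs)
  case Nil then show ?case by simp
next
  case (Cons a xs)
  then show ?case using ax_and1 prv_trans[OF ax_and2] by auto
qed

lemma prv_conjl_intro: "(\<forall>x\<in>set xs. prv (Imp G x)) \<Longrightarrow> prv (Imp G (conjl xs))"
proof (induction xs)
  case Nil then show ?case by (simp add: ax_top prv_K)
next
  case (Cons a xs)
  then show ?case by (simp add: prv_andI)
qed

lemma prv_conjl_sub: "set Ds \<subseteq> set Es \<Longrightarrow> prv (Imp (conjl Es) (conjl Ds))"
  by (metis prv_conjl_intro prv_conjl_elem subsetD)

definition derives :: "fm set \<Rightarrow> fm \<Rightarrow> bool" where
  "derives \<Gamma> C \<longleftrightarrow> (\<exists>Ds. set Ds \<subseteq> \<Gamma> \<and> prv (Imp (conjl Ds) C))"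

lemma derives_mem: "C \<in> \<Gamma> \<Longrightarrow> derives \<Gamma> C"
  unfolding derives_def
  by (rule exI[of _ "[C]"]) (simp add: ax_and1)

lemma derives_prv: "prv C \<Longrightarrow> derives \<Gamma> C"
  unfolding derives_def by (rule exI[of _ "[]"]) (simp add: prv_K)

lemma derives_mono: "derives \<Gamma> C \<Longrightarrow> \<Gamma> \<subseteq> \<Delta> \<Longrightarrow> derives \<Delta> C"
  unfolding derives_def by blast

lemma derives_append: "set Ds \<subseteq> \<Gamma> \<Longrightarrow> set Es \<subseteq> \<Gamma> \<Longrightarrow>
   prv (Imp (conjl (Ds @ Es)) (conjl Ds)) \<and> prv (Imp (conjl (Ds @ Es)) (conjl Es))"
  by (simp add: prv_conjl_sub)

lemma derives_and_intro: "derives \<Gamma> X \<Longrightarrow> derives \<Gamma> Y \<Longrightarrow> derives \<Gamma> (And X Y)"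
proof -
  assume "derives \<Gamma> X" "derives \<Gamma> Y"
  then obtain Ds Es where D: "set Ds \<subseteq> \<Gamma>" "prv (Imp (conjl Ds) X)"
    and E: "set Es \<subseteq> \<Gamma>" "prv (Imp (conjl Es) Y)" unfolding derives_def by blast
  have "prv (Imp (conjl (Ds @ Es)) X)" "prv (Imp (conjl (Ds @ Es)) Y)"
    using derives_append[OF D(1) E(1)] D(2) E(2) prv_trans by blast+
  then show ?thesis unfolding derives_def using D(1) E(1)
    by (intro exI[of _ "Ds @ Es"]) (auto intro: prv_andI)
qed

lemma derives_mp: "derives \<Gamma> (Imp X Y) \<Longrightarrow> derives \<Gamma> X \<Longrightarrow> derives \<Gamma> Y"
proof -
  assume "derives \<Gamma> (Imp X Y)" "derives \<Gamma> X"
  then obtain Ds Es where D: "set Ds \<subseteq> \<Gamma>" "prv (Imp (conjl Ds) (Imp X Y))"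
    and E: "set Es \<subseteq> \<Gamma>" "prv (Imp (conjl Es) X)" unfolding derives_def by blast
  have "prv (Imp (conjl (Ds @ Es)) (Imp X Y))" "prv (Imp (conjl (Ds @ Es)) X)"
    using derives_append[OF D(1) E(1)] D(2) E(2) prv_trans by blast+
  then show ?thesis unfolding derives_def using D(1) E(1)
    by (intro exI[of _ "Ds @ Es"]) (auto intro: prv_S)
qed

lemma derives_prv_mp: "prv (Imp X Y) \<Longrightarrow> derives \<Gamma> X \<Longrightarrow> derives \<Gamma> Y"
  using derives_mp derives_prv by blast

lemma derives_deduct: "derives (insert D \<Gamma>) E \<Longrightarrow> derives \<Gamma> (Imp D E)"
proof -
  assume "derives (insert D \<Gamma>) E"
  then obtain Ds where D: "set Ds \<subseteq> insert D \<Gamma>" "prv (Imp (conjl Ds) E)"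
    unfolding derives_def by blast
  let ?Ds = "filter (\<lambda>x. x \<noteq> D) Ds"
  have "prv (Imp (And (conjl ?Ds) D) (conjl Ds))"
  proof (rule prv_conjl_intro, rule ballI)
    fix x assume "x \<in> set Ds"
    show "prv (Imp (And (conjl ?Ds) D) x)"
    proof (cases "x = D")
      case True then show ?thesis by (simp add: ax_and2)
    next
      case False
      then have "x \<in> set ?Ds" using \<open>x \<in> set Ds\<close> by simp
      then show ?thesis using prv_conjl_elem ax_and1 prv_trans by blast
    qed
  qed
  then have "prv (Imp (And (conjl ?Ds) D) E)" using D(2) prv_trans by blast
  then have "prv (Imp (conjl ?Ds) (Imp D E))" by (rule prv_curry)
  moreover have "set ?Ds \<subseteq> \<Gamma>" using D(1) by auto
  ultimately show ?thesis unfolding derives_def by blast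
qed

lemma derives_undeduct: "derives \<Gamma> (Imp D E) \<Longrightarrow> derives (insert D \<Gamma>) E"
  by (meson derives_mem derives_mono derives_mp insertI1 subset_insertI)

lemma derives_conjl: "set Ds \<subseteq> {C. derives \<Gamma> C} \<Longrightarrow> derives \<Gamma> (conjl Ds)"
proof (induction Ds)
  case Nil then show ?case by (simp add: ax_top derives_prv)
next
  case (Cons a Ds) then show ?case by (simp add: derives_and_intro)
qed

lemma derives_cut: "(\<forall>C\<in>\<Delta>. derives \<Gamma> C) \<Longrightarrow> derives \<Delta> E \<Longrightarrow> derives \<Gamma> E"
proof -
  assume a: "\<forall>C\<in>\<Delta>. derives \<Gamma> C" and "derives \<Delta> E"
  then obtain Ds where D: "set Ds \<subseteq> \<Delta>" "prv (Imp (conjl Ds) E)"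
    unfolding derives_def by blast
  have "derives \<Gamma> (conjl Ds)" using D(1) a by (intro derives_conjl) auto
  then show ?thesis using D(2) derives_prv_mp by blast
qed

lemma derives_orE: "derives (insert C \<Gamma>) B \<Longrightarrow> derives (insert D \<Gamma>) B \<Longrightarrow> derives \<Gamma> (Or C D) \<Longrightarrow> derives \<Gamma> B"
  by (meson ax_orE derives_deduct derives_mp derives_prv)

section \<open>Classes and prime filters\<close>

lemma equiv_refl: "ipc_equiv A A" by (simp add: ipc_equiv_def prv_I)
lemma equiv_sym: "ipc_equiv A B \<Longrightarrow> ipc_equiv B A" by (simp add: ipc_equiv_def)
lemma equiv_trans: "ipc_equiv A B \<Longrightarrow> ipc_equiv B C \<Longrightarrow> ipc_equiv A C"
  unfolding ipc_equiv_def using prv_trans by blast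

lemma Fm_simps[simp]:
  "Var i \<in> Fm n \<longleftrightarrow> i < n" "Top \<in> Fm n" "Bot \<in> Fm n"
  "And A B \<in> Fm n \<longleftrightarrow> A \<in> Fm n \<and> B \<in> Fm n"
  "Or A B \<in> Fm n \<longleftrightarrow> A \<in> Fm n \<and> B \<in> Fm n"
  "Imp A B \<in> Fm n \<longleftrightarrow> A \<in> Fm n \<and> B \<in> Fm n"
  by (auto simp: Fm_def)

lemma conjl_Fm: "set xs \<subseteq> Fm n \<Longrightarrow> conjl xs \<in> Fm n"
  by (induction xs) auto
lemma disjl_Fm: "set xs \<subseteq> Fm n \<Longrightarrow> disjl xs \<in> Fm n"
  by (induction xs) auto

lemma IFm_Fm: "A \<in> IFm n \<Longrightarrow> A \<in> Fm n" by (simp add: IFm_def Fm_def)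

lemma IFm_simps[simp]:
  "Var i \<in> IFm n \<longleftrightarrow> i < n" "Top \<in> IFm n" "Bot \<notin> IFm n"
  "And A B \<in> IFm n \<longleftrightarrow> A \<in> IFm n \<and> B \<in> IFm n"
  "Or A B \<notin> IFm n"
  "Imp A B \<in> IFm n \<longleftrightarrow> A \<in> IFm n \<and> B \<in> IFm n"
  by (auto simp: IFm_def)

lemma conjl_IFm: "set xs \<subseteq> IFm n \<Longrightarrow> conjl xs \<in> IFm n"
  by (induction xs) auto

lemma cls_mem: "A \<in> Fm n \<Longrightarrow> A \<in> cls n A"
  by (simp add: cls_def equiv_refl)

lemma cls_sub: "cls n A \<subseteq> Fm n" by (auto simp: cls_def)

lemma cls_eq: "A \<in> Fm n \<Longrightarrow> B \<in> Fm n \<Longrightarrow> cls n A = cls n B \<longleftrightarrow> ipc_equiv A B"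
proof
  assume "A \<in> Fm n" "B \<in> Fm n" "cls n A = cls n B"
  then have "B \<in> cls n A" using cls_mem by metis
  then show "ipc_equiv A B" by (simp add: cls_def)
next
  assume "ipc_equiv A B"
  then show "cls n A = cls n B" unfolding cls_def
    using equiv_trans equiv_sym by blast
qed

lemma cls_in_lind: "A \<in> Fm n \<Longrightarrow> cls n A \<in> lind n" by (simp add: lind_def)

context
  fixes n :: nat and x :: "fm set set"
  assumes pf: "prime_filter n x"
begin

lemma pf_elem: "a \<in> x \<Longrightarrow> \<exists>A\<in>Fm n. a = cls n A"
  using pf unfolding prime_filter_def lind_def by blast

lemma pf_up: "cls n A \<in> x \<Longrightarrow> A \<in> Fm n \<Longrightarrow> B \<in> Fm n \<Longrightarrow> prv (Imp A B) \<Longrightarrow> cls n B \<in> x"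
proof -
  assume a: "cls n A \<in> x" "A \<in> Fm n" "B \<in> Fm n" "prv (Imp A B)"
  have "lind_le (cls n A) (cls n B)" unfolding lind_le_def using a cls_mem by blast
  moreover have "\<forall>a\<in>x. \<forall>b\<in>lind n. lind_le a b \<longrightarrow> b \<in> x" using pf by (simp add: prime_filter_def)
  ultimately show ?thesis using a cls_in_lind by blast
qed

lemma pf_top: "cls n Top \<in> x" using pf by (simp add: prime_filter_def)
lemma pf_bot: "cls n Bot \<notin> x" using pf by (simp add: prime_filter_def)

lemma pf_and_cl: "A \<in> Fm n \<Longrightarrow> B \<in> Fm n \<Longrightarrow> cls n A \<in> x \<Longrightarrow> cls n B \<in> x \<Longrightarrow> cls n (And A B) \<in> x"
  using pf unfolding prime_filter_def by blast

lemma pf_or_pr: "A \<in> Fm n \<Longrightarrow> B \<in> Fm n \<Longrightarrow> cls n (Or A B) \<in> x \<Longrightarrow> cls n A \<in> x \<or> cls n B \<in> x"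
  using pf unfolding prime_filter_def by blast

lemma pf_and: "A \<in> Fm n \<Longrightarrow> B \<in> Fm n \<Longrightarrow> cls n (And A B) \<in> x \<longleftrightarrow> cls n A \<in> x \<and> cls n B \<in> x"
proof -
  assume ab: "A \<in> Fm n" "B \<in> Fm n"
  have 1: "cls n (And A B) \<in> x \<Longrightarrow> cls n A \<in> x"
    using pf_up[of "And A B" A] ab ax_and1 by simp
  have 2: "cls n (And A B) \<in> x \<Longrightarrow> cls n B \<in> x"
    using pf_up[of "And A B" B] ab ax_and2 by simp
  show ?thesis using 1 2 pf_and_cl[OF ab] by blast
qed

lemma pf_or: "A \<in> Fm n \<Longrightarrow> B \<in> Fm n \<Longrightarrow> cls n (Or A B) \<in> x \<longleftrightarrow> cls n A \<in> x \<or> cls n B \<in> x"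
proof -
  assume ab: "A \<in> Fm n" "B \<in> Fm n"
  have 1: "cls n A \<in> x \<Longrightarrow> cls n (Or A B) \<in> x"
    using pf_up[of A "Or A B"] ab ax_or1 by simp
  have 2: "cls n B \<in> x \<Longrightarrow> cls n (Or A B) \<in> x"
    using pf_up[of B "Or A B"] ab ax_or2 by simp
  show ?thesis using 1 2 pf_or_pr[OF ab] by blast
qed

lemma pf_mp: "A \<in> Fm n \<Longrightarrow> B \<in> Fm n \<Longrightarrow> cls n (Imp A B) \<in> x \<Longrightarrow> cls n A \<in> x \<Longrightarrow> cls n B \<in> x"
proof -
  assume a: "A \<in> Fm n" "B \<in> Fm n" "cls n (Imp A B) \<in> x" "cls n A \<in> x"
  then have "cls n (And (Imp A B) A) \<in> x" using pf_and by simp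
  moreover have "prv (Imp (And (Imp A B) A) B)"
    by (meson ax_and1 ax_and2 prv_S)
  ultimately show ?thesis using pf_up a by simp
qed

lemma pf_conjl: "set xs \<subseteq> Fm n \<Longrightarrow> cls n (conjl xs) \<in> x \<longleftrightarrow> (\<forall>A\<in>set xs. cls n A \<in> x)"
  by (induction xs) (auto simp: pf_top pf_and conjl_Fm)

lemma pf_disjl: "set xs \<subseteq> Fm n \<Longrightarrow> cls n (disjl xs) \<in> x \<longleftrightarrow> (\<exists>A\<in>set xs. cls n A \<in> x)"
  by (induction xs) (auto simp: pf_bot pf_or disjl_Fm)

lemma pf_equiv: "A \<in> Fm n \<Longrightarrow> B \<in> Fm n \<Longrightarrow> ipc_equiv A B \<Longrightarrow> cls n A \<in> x \<longleftrightarrow> cls n B \<in> x"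
proof -
  assume "A \<in> Fm n" "B \<in> Fm n" "ipc_equiv A B"
  then have "cls n A = cls n B" using cls_eq by blast
  then show ?thesis by simp
qed

lemma pf_ext: "prime_filter n y \<Longrightarrow> (\<forall>A\<in>Fm n. cls n A \<in> x \<longleftrightarrow> cls n A \<in> y) \<Longrightarrow> x = y"
proof -
  assume y: "prime_filter n y" and e: "\<forall>A\<in>Fm n. cls n A \<in> x \<longleftrightarrow> cls n A \<in> y"
  have "x \<subseteq> lind n" "y \<subseteq> lind n" using pf y by (auto simp: prime_filter_def)
  then show "x = y" using e unfolding lind_def by blast
qed

end

section \<open>Lindenbaum lemma\<close>

lemma lindenbaum:
  assumes pf: "prime_filter n x" and A: "A \<in> Fm n" and B: "B \<in> Fm n"
    and nimp: "cls n (Imp A B) \<notin> x"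
  shows "\<exists>y. prime_filter n y \<and> x \<subseteq> y \<and> cls n A \<in> y \<and> cls n B \<notin> y"
proof -
  define G where "G = {C \<in> Fm n. cls n C \<in> x}"
  define F where "F = {D. insert A G \<subseteq> D \<and> D \<subseteq> Fm n \<and> \<not> derives D B}"
  have base: "insert A G \<in> F"
  proof -
    have "\<not> derives (insert A G) B"
    proof
      assume "derives (insert A G) B"
      then have "derives G (Imp A B)" by (rule derives_deduct)
      then obtain Ds where D: "set Ds \<subseteq> G" "prv (Imp (conjl Ds) (Imp A B))"
        unfolding derives_def by blast
      have "set Ds \<subseteq> Fm n" using D(1) G_def by auto
      then have "cls n (conjl Ds) \<in> x" using D(1) pf_conjl[OF pf] G_def by auto
      then have "cls n (Imp A B) \<in> x"
        using pf_up[OF pf] D(2) A B conjl_Fm \<open>set Ds \<subseteq> Fm n\<close> by simp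
      then show False using nimp by simp
    qed
    then show ?thesis using A by (auto simp: F_def G_def)
  qed
  have "\<exists>M\<in>F. \<forall>X\<in>F. M \<subseteq> X \<longrightarrow> X = M"
  proof (rule subset_Zorn_nonempty)
    show "F \<noteq> {}" using base by blast
  next
    fix C assume C: "C \<noteq> {}" "subset.chain F C"
    have CF: "C \<subseteq> F" and ch: "\<forall>X\<in>C. \<forall>Y\<in>C. X \<subseteq> Y \<or> Y \<subseteq> X"
      using C(2) by (auto simp: subset_chain_def)
    have "\<not> derives (\<Union>C) B"
    proof
      assume "derives (\<Union>C) B"
      then obtain Ds where D: "set Ds \<subseteq> \<Union>C" "prv (Imp (conjl Ds) B)"
        unfolding derives_def by blast
      have "\<exists>X\<in>C. set Ds \<subseteq> X"
        using D(1)
      proof (induction Ds)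
        case Nil then show ?case using C(1) by auto
      next
        case (Cons a Ds)
        then obtain X where X: "X \<in> C" "set Ds \<subseteq> X" by auto
        obtain Y where Y: "Y \<in> C" "a \<in> Y" using Cons.prems by auto
        show ?case using ch X Y by (metis insert_subset list.simps(15) subset_trans)
      qed
      then obtain X where "X \<in> C" "set Ds \<subseteq> X" by blast
      then have "derives X B" using D(2) unfolding derives_def by blast
      then show False using \<open>X \<in> C\<close> CF F_def by blast
    qed
    then show "\<Union>C \<in> F" using C(1) CF unfolding F_def by blast
  qed
  then obtain M where M: "M \<in> F" and max: "\<forall>X\<in>F. M \<subseteq> X \<longrightarrow> X = M" by blast
  have MF: "M \<subseteq> Fm n" "insert A G \<subseteq> M" "\<not> derives M B" using M by (auto simp: F_def)
  have closed: "C \<in> M" if "C \<in> Fm n" "derives M C" for C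
  proof (rule ccontr)
    assume "C \<notin> M"
    have "\<not> derives (insert C M) B"
    proof
      assume "derives (insert C M) B"
      then have "derives M B" using derives_cut[of "insert C M" M B] that derives_mem by blast
      then show False using MF by simp
    qed
    then have "insert C M \<in> F" using MF that by (auto simp: F_def)
    then show False using max \<open>C \<notin> M\<close> by blast
  qed
  define y where "y = cls n ` M"
  have key: "cls n C \<in> y \<longleftrightarrow> C \<in> M" if "C \<in> Fm n" for C
  proof
    assume "cls n C \<in> y"
    then obtain D where D: "D \<in> M" "cls n C = cls n D" by (auto simp: y_def)
    then have "ipc_equiv D C" using cls_eq that MF equiv_sym by blast
    then have "derives M C" using D(1) derives_mem derives_prv_mp ipc_equiv_def by blast
    then show "C \<in> M" using closed that by blast
  qed (simp add: y_def)
  have pfy: "prime_filter n y"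
    unfolding prime_filter_def
  proof (intro conjI ballI impI)
    show "y \<subseteq> lind n" using MF by (auto simp: y_def lind_def)
    show "cls n Top \<in> y" using key closed by (simp add: ax_top derives_prv)
    show "cls n Bot \<notin> y"
    proof
      assume "cls n Bot \<in> y"
      then have "Bot \<in> M" using key by simp
      then have "derives M B" by (meson ax_bot derives_mem derives_prv_mp)
      then show False using MF by simp
    qed
  next
    fix a b assume ab: "a \<in> y" "b \<in> lind n" "lind_le a b"
    then obtain C where C: "C \<in> M" "a = cls n C" by (auto simp: y_def)
    obtain D where D: "D \<in> Fm n" "b = cls n D" using ab(2) by (auto simp: lind_def)
    obtain A' B' where AB: "A' \<in> a" "B' \<in> b" "prv (Imp A' B')"
      using ab(3) by (auto simp: lind_le_def)
    have "ipc_equiv C A'" "ipc_equiv D B'" using AB C D by (auto simp: cls_def)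
    then have "derives M D"
      by (meson AB(3) C(1) derives_mem derives_prv_mp ipc_equiv_def)
    then show "b \<in> y" using closed D key by blast
  next
    fix C D assume CD: "C \<in> Fm n" "D \<in> Fm n" "cls n C \<in> y \<and> cls n D \<in> y"
    then have "derives M (And C D)" using key derives_and_intro derives_mem by blast
    then show "cls n (And C D) \<in> y" using key closed CD by simp
  next
    fix C D assume CD: "C \<in> Fm n" "D \<in> Fm n" "cls n (Or C D) \<in> y"
    show "cls n C \<in> y \<or> cls n D \<in> y"
    proof (rule ccontr)
      assume "\<not> (cls n C \<in> y \<or> cls n D \<in> y)"
      then have nC: "C \<notin> M" "D \<notin> M" using key CD by auto
      have "insert C M \<notin> F" using max nC by blast
      then have 1: "derives (insert C M) B" using MF CD by (auto simp: F_def)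
      have "insert D M \<notin> F" using max nC by blast
      then have 2: "derives (insert D M) B" using MF CD by (auto simp: F_def)
      have "Or C D \<in> M" using key CD by simp
      then have "derives M B" using derives_orE[OF 1 2] derives_mem by blast
      then show False using MF by simp
    qed
  qed
  have "x \<subseteq> y"
  proof
    fix a assume "a \<in> x"
    then obtain C where "C \<in> Fm n" "a = cls n C" using pf_elem[OF pf] by blast
    then show "a \<in> y" using MF \<open>a \<in> x\<close> by (auto simp: G_def y_def)
  qed
  moreover have "cls n A \<in> y" using key A MF by auto
  moreover have "cls n B \<notin> y" using key B MF derives_mem by blast
  ultimately show ?thesis using pfy by (intro exI[of _ y]) simp
qed

lemma truth_imp:
  assumes pf: "prime_filter n x" and A: "A \<in> Fm n" and B: "B \<in> Fm n"
  shows "cls n (Imp A B) \<in> x \<longleftrightarrow> (\<forall>y. prime_filter n y \<and> x \<subseteq> y \<and> cls n A \<in> y \<longrightarrow> cls n B \<in> y)"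
proof
  assume "cls n (Imp A B) \<in> x"
  then show "\<forall>y. prime_filter n y \<and> x \<subseteq> y \<and> cls n A \<in> y \<longrightarrow> cls n B \<in> y"
  proof (intro allI impI)
    fix y assume y: "prime_filter n y \<and> x \<subseteq> y \<and> cls n A \<in> y"
    then have "cls n (Imp A B) \<in> y" using \<open>cls n (Imp A B) \<in> x\<close> by blast
    then show "cls n B \<in> y" using pf_mp[OF _ A B] y by blast
  qed
next
  assume "\<forall>y. prime_filter n y \<and> x \<subseteq> y \<and> cls n A \<in> y \<longrightarrow> cls n B \<in> y"
  then show "cls n (Imp A B) \<in> x" using lindenbaum[OF pf A B] by metis
qed

section \<open>Kripke semantics on set-models ordered by inclusion\<close>

fun sat :: "'a set set \<Rightarrow> ('a set \<Rightarrow> nat \<Rightarrow> bool) \<Rightarrow> 'a set \<Rightarrow> fm \<Rightarrow> bool" where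
  "sat W c w (Var i) = c w i"
| "sat W c w Top = True"
| "sat W c w Bot = False"
| "sat W c w (And A B) = (sat W c w A \<and> sat W c w B)"
| "sat W c w (Or A B) = (sat W c w A \<or> sat W c w B)"
| "sat W c w (Imp A B) = (\<forall>v\<in>W. w \<subseteq> v \<longrightarrow> sat W c v A \<longrightarrow> sat W c v B)"

definition mono_col :: "'a set set \<Rightarrow> ('a set \<Rightarrow> nat \<Rightarrow> bool) \<Rightarrow> bool" where
  "mono_col W c \<longleftrightarrow> (\<forall>w\<in>W. \<forall>v\<in>W. \<forall>i. w \<subseteq> v \<longrightarrow> c w i \<longrightarrow> c v i)"

lemma persist:
  assumes mc: "mono_col W c"
  shows "w \<in> W \<Longrightarrow> v \<in> W \<Longrightarrow> w \<subseteq> v \<Longrightarrow> sat W c w A \<Longrightarrow> sat W c v A"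
proof (induction A arbitrary: w v)
  case (Var i) then show ?case using mc by (auto simp: mono_col_def)
next
  case (Imp A B) then show ?case by auto
qed auto

lemma soundness:
  assumes mc: "mono_col W c"
  shows "prv A \<Longrightarrow> w \<in> W \<Longrightarrow> sat W c w A"
proof (induction A arbitrary: w rule: prv.induct)
  case (ax_k A B) then show ?case using persist[OF mc] by auto
next
  case (ax_s A B C)
  show ?case unfolding sat.simps
  proof (intro ballI impI)
    fix v u t
    assume v: "v \<in> W" "w \<subseteq> v" and h1: "\<forall>v'\<in>W. v \<subseteq> v' \<longrightarrow> sat W c v' A \<longrightarrow> (\<forall>v''\<in>W. v' \<subseteq> v'' \<longrightarrow> sat W c v'' B \<longrightarrow> sat W c v'' C)"
      and u: "u \<in> W" "v \<subseteq> u" and h2: "\<forall>v'\<in>W. u \<subseteq> v' \<longrightarrow> sat W c v' A \<longrightarrow> sat W c v' B"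
      and t: "t \<in> W" "u \<subseteq> t" "sat W c t A"
    have "sat W c t B" using h2 t by blast
    moreover have "v \<subseteq> t" using u t by blast
    ultimately show "sat W c t C" using h1 t by blast
  qed
next
  case (ax_andI A B) then show ?case using persist[OF mc] by auto
next
  case (ax_orE A C B) then show ?case by auto
next
  case (mp A B) then show ?case by auto
qed auto

definition Th :: "nat \<Rightarrow> 'a set set \<Rightarrow> ('a set \<Rightarrow> nat \<Rightarrow> bool) \<Rightarrow> 'a set \<Rightarrow> fm set set" where
  "Th n W c w = {cls n A | A. A \<in> Fm n \<and> sat W c w A}"

context
  fixes n :: nat and W :: "'a set set" and c :: "'a set \<Rightarrow> nat \<Rightarrow> bool"
  assumes mc: "mono_col W c"
begin

lemma Th_mem: "A \<in> Fm n \<Longrightarrow> w \<in> W \<Longrightarrow> cls n A \<in> Th n W c w \<longleftrightarrow> sat W c w A"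
proof
  assume a: "A \<in> Fm n" "w \<in> W" "cls n A \<in> Th n W c w"
  then obtain B where B: "B \<in> Fm n" "sat W c w B" "cls n A = cls n B" by (auto simp: Th_def)
  then have "ipc_equiv A B" using cls_eq a by blast
  then have "prv (Imp B A)" by (simp add: ipc_equiv_def)
  then have "sat W c w (Imp B A)" using soundness[OF mc] a by blast
  then show "sat W c w A" using B a by auto
qed (auto simp: Th_def)

lemma Th_pf: "w \<in> W \<Longrightarrow> prime_filter n (Th n W c w)"
  unfolding prime_filter_def
proof (intro conjI ballI impI)
  assume w: "w \<in> W"
  show "Th n W c w \<subseteq> lind n" by (auto simp: Th_def lind_def)
  show "cls n Top \<in> Th n W c w" using Th_mem w by simp
  show "cls n Bot \<notin> Th n W c w" using Th_mem w by simp
  show "cls n (And A B) \<in> Th n W c w" if "A \<in> Fm n" "B \<in> Fm n" "cls n A \<in> Th n W c w \<and> cls n B \<in> Th n W c w" for A B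
    using that Th_mem w by simp
  show "cls n A \<in> Th n W c w \<or> cls n B \<in> Th n W c w" if "A \<in> Fm n" "B \<in> Fm n" "cls n (Or A B) \<in> Th n W c w" for A B
    using that Th_mem w by simp
  show "b \<in> Th n W c w" if hh: "a \<in> Th n W c w" "b \<in> lind n" "lind_le a b" for a b
  proof -
    obtain A where A: "A \<in> Fm n" "a = cls n A" "sat W c w A" using hh(1) unfolding Th_def by blast
    obtain B where B: "B \<in> Fm n" "b = cls n B" using hh(2) by (auto simp: lind_def)
    obtain A' B' where AB: "A' \<in> a" "B' \<in> b" "prv (Imp A' B')" using hh(3) by (auto simp: lind_le_def)
    have e: "ipc_equiv A A'" "ipc_equiv B B'" using AB A B by (auto simp: cls_def)
    have "prv (Imp A B)" using e AB(3) prv_trans unfolding ipc_equiv_def by blast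
    then have "sat W c w (Imp A B)" using soundness[OF mc] w by blast
    then have "sat W c w B" using A w by auto
    then show ?thesis using B Th_mem w by simp
  qed
qed

lemma Th_mono: "w \<in> W \<Longrightarrow> v \<in> W \<Longrightarrow> w \<subseteq> v \<Longrightarrow> Th n W c w \<subseteq> Th n W c v"
  unfolding Th_def using persist[OF mc] by blast

lemma Th_col: "i < n \<Longrightarrow> w \<in> W \<Longrightarrow> canon_col n (Th n W c w) i \<longleftrightarrow> c w i"
  unfolding canon_col_def using Th_mem[of "Var i" w] by simp

lemma finite_set_list: "finite S \<Longrightarrow> \<exists>xs. set xs = S" using finite_list by blast

lemma Th_back:
  assumes w: "w \<in> W" and fin: "\<And>u. u \<in> W \<Longrightarrow> finite {v\<in>W. u \<subseteq> v}"
    and z: "prime_filter n z" and sub: "Th n W c w \<subseteq> z"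
  shows "\<exists>v\<in>W. w \<subseteq> v \<and> z = Th n W c v"
proof -
  define T where "T = {v\<in>W. w \<subseteq> v \<and> Th n W c v \<subseteq> z}"
  have "finite T" using fin[OF w] by (rule rev_finite_subset) (auto simp: T_def)
  moreover have "w \<in> T" using w sub by (simp add: T_def)
  ultimately obtain v where v: "v \<in> T" and vmax: "\<And>u. u \<in> T \<Longrightarrow> v \<subseteq> u \<Longrightarrow> u = v"
    using finite_has_maximal[of T] by blast
  have vW: "v \<in> W" "w \<subseteq> v" "Th n W c v \<subseteq> z" using v by (auto simp: T_def)
  have "z \<subseteq> Th n W c v"
  proof
    fix a assume a: "a \<in> z"
    obtain A where A: "A \<in> Fm n" "a = cls n A" using pf_elem[OF z a] by blast
    show "a \<in> Th n W c v"
    proof (rule ccontr)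
      assume "a \<notin> Th n W c v"
      then have nA: "\<not> sat W c v A" using A Th_mem vW by simp
      define U where "U = {u\<in>W. v \<subseteq> u \<and> u \<noteq> v}"
      have "finite U" using fin[OF vW(1)] by (rule rev_finite_subset) (auto simp: U_def)
      have "\<forall>u\<in>U. \<exists>B. B \<in> Fm n \<and> sat W c u B \<and> cls n B \<notin> z"
      proof
        fix u assume u: "u \<in> U"
        then have "u \<notin> T" using vmax by (auto simp: U_def)
        moreover have "w \<subseteq> u" using u vW by (auto simp: U_def)
        ultimately have "\<not> Th n W c u \<subseteq> z" using u by (auto simp: T_def U_def)
        then obtain b where "b \<in> Th n W c u" "b \<notin> z" by blast
        then show "\<exists>B. B \<in> Fm n \<and> sat W c u B \<and> cls n B \<notin> z" by (auto simp: Th_def)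
      qed
      then obtain f where f: "\<forall>u\<in>U. f u \<in> Fm n \<and> sat W c u (f u) \<and> cls n (f u) \<notin> z"
        by metis
      obtain us where us: "set us = U" using finite_set_list[OF \<open>finite U\<close>] by blast
      define D where "D = disjl (map f us)"
      have DF: "set (map f us) \<subseteq> Fm n" using f us by auto
      have sD: "sat W c u D" if "u \<in> U" for u
      proof -
        have "\<And>xs. u \<in> set xs \<Longrightarrow> sat W c u (f u) \<Longrightarrow> sat W c u (disjl (map f xs))"
          subgoal for xs by (induction xs) auto done
        then show ?thesis using that f us D_def by blast
      qed
      have "sat W c v (Imp A D)"
      proof (simp, intro ballI impI)
        fix u assume u: "u \<in> W" "v \<subseteq> u" "sat W c u A"
        then have "u \<noteq> v" using nA by blast
        then show "sat W c u D" using sD u by (auto simp: U_def)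
      qed
      then have "cls n (Imp A D) \<in> z" using Th_mem vW A disjl_Fm[OF DF] D_def by auto
      then have "cls n D \<in> z" using pf_mp[OF z A(1)] disjl_Fm[OF DF] D_def a A by blast
      then obtain B where "B \<in> set (map f us)" "cls n B \<in> z" using pf_disjl[OF z DF] D_def by blast
      then show False using f us by auto
    qed
  qed
  then show ?thesis using vW by blast
qed

lemma Th_univ:
  assumes w: "w \<in> W" and fin: "\<And>u. u \<in> W \<Longrightarrow> finite {v\<in>W. u \<subseteq> v}"
  shows "Th n W c w \<in> univ_model n"
proof -
  have "{y. prime_filter n y \<and> Th n W c w \<subseteq> y} \<subseteq> Th n W c ` {v\<in>W. w \<subseteq> v}"
    using Th_back[OF w fin] by blast
  then have "finite {y. prime_filter n y \<and> Th n W c w \<subseteq> y}"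
    using fin[OF w] finite_subset by blast
  then show ?thesis using Th_pf[OF w] by (simp add: univ_model_def)
qed

end

section \<open>The universal model\<close>

abbreviation UM where "UM n \<equiv> univ_model n"
abbreviation SP where "SP n \<equiv> separated_points n (univ_model n) (\<subseteq>) (canon_col n)"

lemma UM_pf: "x \<in> UM n \<Longrightarrow> prime_filter n x" by (simp add: univ_model_def)

lemma UM_up: "x \<in> UM n \<Longrightarrow> prime_filter n y \<Longrightarrow> x \<subseteq> y \<Longrightarrow> y \<in> UM n"
proof -
  assume a: "x \<in> UM n" "prime_filter n y" "x \<subseteq> y"
  have "{z. prime_filter n z \<and> y \<subseteq> z} \<subseteq> {z. prime_filter n z \<and> x \<subseteq> z}" using a by auto
  then show ?thesis using a by (auto simp: univ_model_def intro: finite_subset)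
qed

lemma UM_fin: "x \<in> UM n \<Longrightarrow> finite {y\<in>UM n. x \<subseteq> y}"
proof -
  assume a: "x \<in> UM n"
  have "{y\<in>UM n. x \<subseteq> y} \<subseteq> {z. prime_filter n z \<and> x \<subseteq> z}" by (auto simp: univ_model_def)
  then show ?thesis using a by (auto simp: univ_model_def intro: finite_subset)
qed

lemma truth_imp_U:
  assumes x: "x \<in> UM n" and A: "A \<in> Fm n" and B: "B \<in> Fm n"
  shows "cls n (Imp A B) \<in> x \<longleftrightarrow> (\<forall>y\<in>UM n. x \<subseteq> y \<and> cls n A \<in> y \<longrightarrow> cls n B \<in> y)"
proof -
  have "cls n (Imp A B) \<in> x \<longleftrightarrow> (\<forall>y. prime_filter n y \<and> x \<subseteq> y \<and> cls n A \<in> y \<longrightarrow> cls n B \<in> y)"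
    using truth_imp[OF UM_pf[OF x] A B] .
  also have "\<dots> \<longleftrightarrow> (\<forall>y\<in>UM n. x \<subseteq> y \<and> cls n A \<in> y \<longrightarrow> cls n B \<in> y)"
    using UM_up[OF x] UM_pf by blast
  finally show ?thesis .
qed

lemma mono_canon: "mono_col W (canon_col n)"
  by (auto simp: mono_col_def canon_col_def)

lemma SP_UM: "s \<in> SP n \<Longrightarrow> s \<in> UM n" by (simp add: separated_points_def)

lemma SP_fin: "s \<in> SP n \<Longrightarrow> finite {v\<in>SP n. s \<subseteq> v}"
  using UM_fin[OF SP_UM] by (rule finite_subset[rotated]) (auto simp: separated_points_def)

abbreviation f0 where "f0 n \<equiv> Th n (SP n) (canon_col n)"

lemma f0_pmorph: "p_morphism n (SP n) (\<subseteq>) (canon_col n) (UM n) (\<subseteq>) (canon_col n) (f0 n)"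
  unfolding p_morphism_def
proof (intro conjI ballI impI allI)
  fix x assume x: "x \<in> SP n"
  show "f0 n x \<in> UM n" using Th_univ[OF mono_canon x SP_fin] .
next
  fix x y assume "x \<in> SP n" "y \<in> SP n" "x \<subseteq> y"
  then show "f0 n x \<subseteq> f0 n y" using Th_mono[OF mono_canon] by blast
next
  fix x z assume xz: "x \<in> SP n" "z \<in> UM n" "f0 n x \<subseteq> z"
  show "\<exists>y\<in>SP n. x \<subseteq> y \<and> f0 n y = z"
    using Th_back[OF mono_canon xz(1) SP_fin UM_pf[OF xz(2)] xz(3)] by metis
next
  fix x i assume "x \<in> SP n" "i < n"
  then show "canon_col n (f0 n x) i = canon_col n x i" using Th_col[OF mono_canon] by blast
qed

lemma univ_ci_iff: "x \<in> univ_ci n \<longleftrightarrow>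
   (\<exists>f. p_morphism n (SP n) (\<subseteq>) (canon_col n) (UM n) (\<subseteq>) (canon_col n) f \<and> x \<in> f ` SP n)"
  unfolding univ_ci_def by blast

lemma f0_ci: "s \<in> SP n \<Longrightarrow> f0 n s \<in> univ_ci n"
  unfolding univ_ci_iff by (intro exI[of _ "f0 n"] conjI f0_pmorph imageI)

lemma ci_UM: "x \<in> univ_ci n \<Longrightarrow> x \<in> UM n"
proof -
  assume "x \<in> univ_ci n"
  then obtain f s where f: "p_morphism n (SP n) (\<subseteq>) (canon_col n) (UM n) (\<subseteq>) (canon_col n) f"
    and s: "s \<in> SP n" "x = f s" unfolding univ_ci_iff by blast
  have "\<forall>x\<in>SP n. f x \<in> UM n" using f unfolding p_morphism_def by (elim conjE)
  then show ?thesis using s by blast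
qed

lemma ci_up: "x \<in> univ_ci n \<Longrightarrow> y \<in> UM n \<Longrightarrow> x \<subseteq> y \<Longrightarrow> y \<in> univ_ci n"
proof -
  assume a: "x \<in> univ_ci n" "y \<in> UM n" "x \<subseteq> y"
  then obtain f s where f: "p_morphism n (SP n) (\<subseteq>) (canon_col n) (UM n) (\<subseteq>) (canon_col n) f"
    and s: "s \<in> SP n" "x = f s" unfolding univ_ci_iff by blast
  then obtain t where "t \<in> SP n" "f t = y" using a unfolding p_morphism_def by blast
  then show ?thesis using f univ_ci_iff by blast
qed

lemma ci_sep: "x \<in> univ_ci n \<Longrightarrow> \<exists>q<n. cls n (Var q) \<notin> x \<and> (\<forall>y\<in>UM n. x \<subseteq> y \<and> x \<noteq> y \<longrightarrow> cls n (Var q) \<in> y)"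
proof -
  assume a: "x \<in> univ_ci n"
  then obtain f s where f: "p_morphism n (SP n) (\<subseteq>) (canon_col n) (UM n) (\<subseteq>) (canon_col n) f"
    and s: "s \<in> SP n" "x = f s" unfolding univ_ci_iff by blast
  obtain q where q: "q < n" "\<not> canon_col n s q" "\<forall>y\<in>UM n. s \<subseteq> y \<and> s \<noteq> y \<longrightarrow> canon_col n y q"
    using s(1) unfolding separated_points_def by blast
  have col: "\<And>t i. t \<in> SP n \<Longrightarrow> i < n \<Longrightarrow> canon_col n (f t) i = canon_col n t i"
    using f unfolding p_morphism_def by blast
  have "cls n (Var q) \<notin> x" using col[OF s(1) q(1)] q(2) s(2) by (simp add: canon_col_def)
  moreover have "cls n (Var q) \<in> y" if y: "y \<in> UM n" "x \<subseteq> y" "x \<noteq> y" for y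
  proof -
    obtain t where t: "t \<in> SP n" "s \<subseteq> t" "f t = y" using f y s unfolding p_morphism_def by metis
    then have "s \<noteq> t" using y s by blast
    then have "canon_col n t q" using q(3) t SP_UM by blast
    then show ?thesis using col[OF t(1) q(1)] t(3) by (simp add: canon_col_def)
  qed
  ultimately show ?thesis using q(1) by blast
qed

lemma claimB:
  "y \<in> UM n \<Longrightarrow> D \<in> IFm n \<Longrightarrow> cls n D \<notin> y \<Longrightarrow> \<exists>t\<in>SP n. y \<subseteq> t \<and> cls n D \<notin> t"
proof (induction D arbitrary: y)
  case (Var q)
  define T where "T = {t\<in>UM n. y \<subseteq> t \<and> cls n (Var q) \<notin> t}"
  have "finite T" using UM_fin[OF Var.prems(1)] by (rule finite_subset[rotated]) (auto simp: T_def)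
  moreover have "y \<in> T" using Var.prems by (simp add: T_def)
  ultimately obtain t where t: "t \<in> T" and tmax: "\<And>u. u \<in> T \<Longrightarrow> t \<subseteq> u \<Longrightarrow> u = t"
    using finite_has_maximal[of T] by blast
  have q: "q < n" using Var.prems by simp
  have "t \<in> SP n"
    unfolding separated_points_def
  proof (intro CollectI conjI exI[of _ q])
    show "t \<in> UM n" "q < n" "\<not> canon_col n t q" using t q by (auto simp: T_def canon_col_def)
    show "\<forall>u\<in>UM n. t \<subseteq> u \<and> t \<noteq> u \<longrightarrow> canon_col n u q"
    proof (intro ballI impI)
      fix u assume u: "u \<in> UM n" "t \<subseteq> u \<and> t \<noteq> u"
      show "canon_col n u q"
      proof (rule ccontr)
        assume "\<not> canon_col n u q"
        then have "u \<in> T" using u t by (auto simp: T_def canon_col_def)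
        then show False using tmax u by blast
      qed
    qed
  qed
  then show ?case using t by (auto simp: T_def)
next
  case Top
  then show ?case using pf_top[OF UM_pf] by blast
next
  case (And A B)
  have AB: "A \<in> IFm n" "B \<in> IFm n" using And.prems by auto
  have "cls n A \<notin> y \<or> cls n B \<notin> y"
    using pf_and[OF UM_pf[OF And.prems(1)] IFm_Fm[OF AB(1)] IFm_Fm[OF AB(2)]] And.prems(3) by blast
  moreover have "cls n (And A B) \<notin> t" if "t \<in> SP n" "cls n A \<notin> t \<or> cls n B \<notin> t" for t
    using pf_and[OF UM_pf[OF SP_UM[OF that(1)]] IFm_Fm[OF AB(1)] IFm_Fm[OF AB(2)]] that(2) by blast
  ultimately show ?case using And.IH(1)[OF And.prems(1) AB(1)] And.IH(2)[OF And.prems(1) AB(2)] by metis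
next
  case (Imp E F)
  have EF: "E \<in> Fm n" "F \<in> Fm n" "E \<in> IFm n" "F \<in> IFm n" using Imp.prems IFm_Fm by auto
  obtain z where z: "z \<in> UM n" "y \<subseteq> z" "cls n E \<in> z" "cls n F \<notin> z"
    using truth_imp_U[OF Imp.prems(1) EF(1,2)] Imp.prems(3) by blast
  obtain t where t: "t \<in> SP n" "z \<subseteq> t" "cls n F \<notin> t" using Imp.IH(2)[OF z(1) EF(4) z(4)] by blast
  have "cls n (Imp E F) \<notin> t"
    using pf_mp[OF UM_pf[OF SP_UM[OF t(1)]] EF(1,2)] t z by blast
  then show ?case using t z by blast
qed auto

lemma lemmaA:
  "s \<in> SP n \<Longrightarrow> A \<in> IFm n \<Longrightarrow> sat (SP n) (canon_col n) s A \<longleftrightarrow> cls n A \<in> s"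
proof (induction A arbitrary: s)
  case (Var i) then show ?case by (simp add: canon_col_def)
next
  case Top then show ?case using pf_top[OF UM_pf[OF SP_UM]] by simp
next
  case (And A B)
  have AB: "A \<in> IFm n" "B \<in> IFm n" using And.prems by auto
  have "cls n (And A B) \<in> s \<longleftrightarrow> cls n A \<in> s \<and> cls n B \<in> s"
    using pf_and[OF UM_pf[OF SP_UM[OF And.prems(1)]] IFm_Fm[OF AB(1)] IFm_Fm[OF AB(2)]] .
  then show ?case using And.IH And.prems(1) AB by simp
next
  case (Imp C D)
  have CD: "C \<in> Fm n" "D \<in> Fm n" "C \<in> IFm n" "D \<in> IFm n" using Imp.prems IFm_Fm by auto
  have s: "s \<in> UM n" using SP_UM Imp.prems by blast
  show ?case
  proof
    assume sat: "sat (SP n) (canon_col n) s (Imp C D)"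
    show "cls n (Imp C D) \<in> s"
    proof (rule ccontr)
      assume "cls n (Imp C D) \<notin> s"
      then obtain z where z: "z \<in> UM n" "s \<subseteq> z" "cls n C \<in> z" "cls n D \<notin> z"
        using truth_imp_U[OF s CD(1,2)] by blast
      obtain t where t: "t \<in> SP n" "z \<subseteq> t" "cls n D \<notin> t" using claimB[OF z(1) CD(4) z(4)] by blast
      have "sat (SP n) (canon_col n) t C" using Imp.IH(1)[OF t(1) CD(3)] t z by blast
      moreover have "s \<subseteq> t" using t z by blast
      ultimately have "sat (SP n) (canon_col n) t D" using sat t unfolding sat.simps by blast
      then show False using Imp.IH(2)[OF t(1) CD(4)] t by blast
    qed
  next
    assume m: "cls n (Imp C D) \<in> s"
    show "sat (SP n) (canon_col n) s (Imp C D)"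
      unfolding sat.simps
    proof (intro ballI impI)
      fix v assume v: "v \<in> SP n" "s \<subseteq> v" "sat (SP n) (canon_col n) v C"
      then have "cls n C \<in> v" using Imp.IH(1)[OF v(1) CD(3)] by blast
      moreover have "cls n (Imp C D) \<in> v" using m v by blast
      ultimately have "cls n D \<in> v" using pf_mp[OF UM_pf[OF SP_UM[OF v(1)]] CD(1,2)] by blast
      then show "sat (SP n) (canon_col n) v D" using Imp.IH(2)[OF v(1) CD(4)] by blast
    qed
  qed
qed auto

lemma f0_mem: "s \<in> SP n \<Longrightarrow> A \<in> IFm n \<Longrightarrow> cls n A \<in> f0 n s \<longleftrightarrow> cls n A \<in> s"
  using Th_mem[OF mono_canon IFm_Fm] lemmaA by blast

lemma reduced:
  assumes x: "x \<in> UM n" and w: "w \<in> UM n"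
    and col: "\<forall>i<n. cls n (Var i) \<in> x \<longleftrightarrow> cls n (Var i) \<in> w"
    and succ: "\<forall>y\<in>UM n. (x \<subseteq> y \<and> x \<noteq> y) \<longleftrightarrow> (w \<subseteq> y \<and> w \<noteq> y)"
  shows "x = w"
proof -
  have px: "prime_filter n x" and pw: "prime_filter n w" using x w UM_pf by auto
  have "A \<in> Fm n \<Longrightarrow> cls n A \<in> x \<longleftrightarrow> cls n A \<in> w" for A
  proof (induction A)
    case (Var i) then show ?case using col by simp
  next
    case Top then show ?case using pf_top px pw by blast
  next
    case Bot then show ?case using pf_bot px pw by blast
  next
    case (And A B) then show ?case using pf_and[OF px] pf_and[OF pw] by simp
  next
    case (Or A B) then show ?case using pf_or[OF px] pf_or[OF pw] by simp
  next
    case (Imp A B)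
    have AB: "A \<in> Fm n" "B \<in> Fm n" using Imp.prems by auto
    have IH: "cls n A \<in> x \<longleftrightarrow> cls n A \<in> w" "cls n B \<in> x \<longleftrightarrow> cls n B \<in> w"
      using Imp.IH AB by auto
    have split: "(\<forall>y\<in>UM n. z \<subseteq> y \<and> cls n A \<in> y \<longrightarrow> cls n B \<in> y) \<longleftrightarrow>
       (cls n A \<in> z \<longrightarrow> cls n B \<in> z) \<and> (\<forall>y\<in>UM n. z \<subseteq> y \<and> z \<noteq> y \<and> cls n A \<in> y \<longrightarrow> cls n B \<in> y)"
      if z: "z \<in> UM n" for z
    proof
      assume h: "\<forall>y\<in>UM n. z \<subseteq> y \<and> cls n A \<in> y \<longrightarrow> cls n B \<in> y"
      then show "(cls n A \<in> z \<longrightarrow> cls n B \<in> z) \<and> (\<forall>y\<in>UM n. z \<subseteq> y \<and> z \<noteq> y \<and> cls n A \<in> y \<longrightarrow> cls n B \<in> y)"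
        using z by blast
    next
      assume h: "(cls n A \<in> z \<longrightarrow> cls n B \<in> z) \<and> (\<forall>y\<in>UM n. z \<subseteq> y \<and> z \<noteq> y \<and> cls n A \<in> y \<longrightarrow> cls n B \<in> y)"
      show "\<forall>y\<in>UM n. z \<subseteq> y \<and> cls n A \<in> y \<longrightarrow> cls n B \<in> y"
      proof (intro ballI impI)
        fix y assume y: "y \<in> UM n" "z \<subseteq> y \<and> cls n A \<in> y"
        show "cls n B \<in> y"
        proof (cases "z = y")
          case True then show ?thesis using h y by blast
        next
          case False then show ?thesis using h y by blast
        qed
      qed
    qed
    have sx: "(\<forall>y\<in>UM n. x \<subseteq> y \<and> x \<noteq> y \<and> cls n A \<in> y \<longrightarrow> cls n B \<in> y) \<longleftrightarrow>
              (\<forall>y\<in>UM n. w \<subseteq> y \<and> w \<noteq> y \<and> cls n A \<in> y \<longrightarrow> cls n B \<in> y)"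
    proof (rule ball_cong[OF refl])
      fix y assume "y \<in> UM n"
      then have "(x \<subseteq> y \<and> x \<noteq> y) = (w \<subseteq> y \<and> w \<noteq> y)" using succ by blast
      then show "(x \<subseteq> y \<and> x \<noteq> y \<and> cls n A \<in> y \<longrightarrow> cls n B \<in> y) =
              (w \<subseteq> y \<and> w \<noteq> y \<and> cls n A \<in> y \<longrightarrow> cls n B \<in> y)" by blast
    qed
    have "cls n (Imp A B) \<in> x \<longleftrightarrow> (\<forall>y\<in>UM n. x \<subseteq> y \<and> cls n A \<in> y \<longrightarrow> cls n B \<in> y)"
      using truth_imp_U[OF x AB] .
    also have "\<dots> \<longleftrightarrow> (\<forall>y\<in>UM n. w \<subseteq> y \<and> cls n A \<in> y \<longrightarrow> cls n B \<in> y)"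
      unfolding split[OF x] split[OF w] sx IH ..
    also have "\<dots> \<longleftrightarrow> cls n (Imp A B) \<in> w"
      using truth_imp_U[OF w AB] by simp
    finally show ?case .
  qed
  then show ?thesis using pf_ext[OF px pw] by blast
qed

section \<open>Finite countermodels for (and,imp)-implications\<close>

fun subf :: "fm \<Rightarrow> fm set" where
  "subf (Var i) = {Var i}"
| "subf Top = {Top}"
| "subf Bot = {Bot}"
| "subf (And A B) = insert (And A B) (subf A \<union> subf B)"
| "subf (Or A B) = insert (Or A B) (subf A \<union> subf B)"
| "subf (Imp A B) = insert (Imp A B) (subf A \<union> subf B)"

lemma finite_subf: "finite (subf A)" by (induction A) auto
lemma subf_self: "A \<in> subf A" by (cases A) auto
lemma subf_trans: "B \<in> subf A \<Longrightarrow> subf B \<subseteq> subf A"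
  by (induction A) auto
lemma subf_IFm: "A \<in> IFm n \<Longrightarrow> B \<in> subf A \<Longrightarrow> B \<in> IFm n"
  by (induction A) auto

lemma countermodel:
  assumes A: "A \<in> IFm n" and B: "B \<in> IFm n" and np: "\<not> prv (Imp A B)"
  shows "\<exists>x\<in>UM n. cls n A \<in> x \<and> cls n B \<notin> x"
proof -
  define Sub where "Sub = subf A \<union> subf B"
  have finSub: "finite Sub" by (simp add: Sub_def finite_subf)
  have SubI: "C \<in> IFm n" if "C \<in> Sub" for C using that subf_IFm A B by (auto simp: Sub_def)
  have SubSub: "Y \<in> Sub" if "X \<in> Sub" "Y \<in> subf X" for X Y
    using that subf_trans[of X A] subf_trans[of X B] unfolding Sub_def by blast
  have SubAnd: "C \<in> Sub \<and> D \<in> Sub" if "And C D \<in> Sub" for C D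
    using SubSub[OF that] subf_self by simp
  have SubImp: "C \<in> Sub \<and> D \<in> Sub" if "Imp C D \<in> Sub" for C D
    using SubSub[OF that] subf_self by simp
  define K where "K = {G. G \<subseteq> Sub \<and> (\<forall>C\<in>Sub. derives G C \<longrightarrow> C \<in> G)}"
  define cK where "cK = (\<lambda>G::fm set. \<lambda>i. Var i \<in> G)"
  have mc: "mono_col K cK" by (auto simp: mono_col_def cK_def)
  have finK: "finite K" using finSub by (rule rev_finite_subset[OF finite_Pow_iff[THEN iffD2]]) (auto simp: K_def)
  have truth: "G \<in> K \<Longrightarrow> C \<in> Sub \<Longrightarrow> sat K cK G C \<longleftrightarrow> C \<in> G" for G C
  proof (induction C arbitrary: G)
    case (Var i) then show ?case by (simp add: cK_def)
  next
    case Top then show ?case by (simp add: K_def ax_top derives_prv)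
  next
    case Bot then show ?case using SubI by fastforce
  next
    case (Or C D) then show ?case using SubI by fastforce
  next
    case (And C D)
    have CD: "C \<in> Sub" "D \<in> Sub" using SubAnd And.prems by blast+
    have cl: "\<forall>E\<in>Sub. derives G E \<longrightarrow> E \<in> G" using And.prems by (simp add: K_def)
    have "And C D \<in> G \<longleftrightarrow> C \<in> G \<and> D \<in> G"
    proof
      assume "And C D \<in> G"
      then have "derives G C" "derives G D" using derives_mem derives_prv_mp ax_and1 ax_and2 by blast+
      then show "C \<in> G \<and> D \<in> G" using cl CD by blast
    next
      assume "C \<in> G \<and> D \<in> G"
      then have "derives G (And C D)" using derives_mem derives_and_intro by blast
      then show "And C D \<in> G" using cl And.prems by blast
    qed
    then show ?case using And.IH And.prems(1) CD by simp
  next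
    case (Imp C D)
    have CD: "C \<in> Sub" "D \<in> Sub" using SubImp Imp.prems by blast+
    have GK: "G \<subseteq> Sub" "\<forall>E\<in>Sub. derives G E \<longrightarrow> E \<in> G" using Imp.prems by (auto simp: K_def)
    show ?case
    proof
      assume sat: "sat K cK G (Imp C D)"
      define Dl where "Dl = {E\<in>Sub. derives (insert C G) E}"
      have DlK: "Dl \<in> K"
      proof -
        have "E \<in> Dl" if "E \<in> Sub" "derives Dl E" for E
        proof -
          have "\<forall>F\<in>Dl. derives (insert C G) F" by (simp add: Dl_def)
          then have "derives (insert C G) E" using derives_cut that(2) by blast
          then show ?thesis using that(1) by (simp add: Dl_def)
        qed
        then show ?thesis by (auto simp: K_def Dl_def)
      qed
      have "G \<subseteq> Dl" using GK derives_mem by (auto simp: Dl_def)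
      moreover have "C \<in> Dl" using CD derives_mem by (simp add: Dl_def)
      ultimately have "D \<in> Dl" using sat DlK Imp.IH CD by auto
      then have "derives (insert C G) D" by (simp add: Dl_def)
      then have "derives G (Imp C D)" by (rule derives_deduct)
      then show "Imp C D \<in> G" using GK Imp.prems by blast
    next
      assume m: "Imp C D \<in> G"
      show "sat K cK G (Imp C D)"
        unfolding sat.simps
      proof (intro ballI impI)
        fix H assume H: "H \<in> K" "G \<subseteq> H" "sat K cK H C"
        then have "C \<in> H" using Imp.IH(1) CD by blast
        moreover have "Imp C D \<in> H" using m H by blast
        ultimately have "derives H D" using derives_mem derives_mp by blast
        then have "D \<in> H" using H(1) CD by (auto simp: K_def)
        then show "sat K cK H D" using Imp.IH(2) H(1) CD by blast
      qed
    qed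
  qed
  define G0 where "G0 = {C\<in>Sub. derives {A} C}"
  have G0K: "G0 \<in> K"
  proof -
    have "E \<in> G0" if "E \<in> Sub" "derives G0 E" for E
    proof -
      have "\<forall>F\<in>G0. derives {A} F" by (simp add: G0_def)
      then have "derives {A} E" using derives_cut that(2) by blast
      then show ?thesis using that(1) by (simp add: G0_def)
    qed
    then show ?thesis by (auto simp: K_def G0_def)
  qed
  have ASub: "A \<in> Sub" "B \<in> Sub" using subf_self by (auto simp: Sub_def)
  have "A \<in> G0" using ASub derives_mem by (simp add: G0_def)
  moreover have "B \<notin> G0"
  proof
    assume "B \<in> G0"
    then obtain Ds where Ds: "set Ds \<subseteq> {A}" "prv (Imp (conjl Ds) B)"
      unfolding G0_def derives_def by blast
    have "prv (Imp A (conjl Ds))" using Ds(1) prv_I by (intro prv_conjl_intro) auto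
    then show False using Ds(2) prv_trans np by blast
  qed
  ultimately have s: "sat K cK G0 A" "\<not> sat K cK G0 B" using truth G0K ASub by auto
  have fin: "finite {v\<in>K. u \<subseteq> v}" if "u \<in> K" for u using finK by simp
  have "Th n K cK G0 \<in> UM n" using Th_univ[OF mc G0K fin] .
  moreover have "cls n A \<in> Th n K cK G0" "cls n B \<notin> Th n K cK G0"
    using Th_mem[OF mc] s G0K IFm_Fm A B by auto
  ultimately show ?thesis by blast
qed

section \<open>Structure of U(n)_{and,imp}\<close>

definition col :: "nat \<Rightarrow> fm set set \<Rightarrow> nat set" where
  "col n x = {i. i < n \<and> cls n (Var i) \<in> x}"

lemma col_sub: "col n x \<subseteq> {..<n}" by (auto simp: col_def)
lemma col_fin: "finite (col n x)" using col_sub finite_subset by blast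
lemma col_card: "card (col n x) \<le> n" using card_mono[OF _ col_sub] by fastforce

lemma ci_pf: "x \<in> univ_ci n \<Longrightarrow> prime_filter n x" using ci_UM UM_pf by blast

lemma ci_col_strict:
  assumes x: "x \<in> univ_ci n" and y: "y \<in> univ_ci n" and xy: "x \<subseteq> y" "x \<noteq> y"
  shows "col n x \<subset> col n y"
proof -
  obtain q where q: "q < n" "cls n (Var q) \<notin> x" "\<forall>y\<in>UM n. x \<subseteq> y \<and> x \<noteq> y \<longrightarrow> cls n (Var q) \<in> y"
    using ci_sep[OF x] by blast
  have "cls n (Var q) \<in> y" using q(3) ci_UM[OF y] xy by blast
  then have "q \<in> col n y" "q \<notin> col n x" using q by (auto simp: col_def)
  moreover have "col n x \<subseteq> col n y" using xy by (auto simp: col_def)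
  ultimately show ?thesis by blast
qed

lemma ci_reduced:
  assumes x: "x \<in> univ_ci n" and w: "w \<in> univ_ci n" and c: "col n x = col n w"
    and s: "\<forall>y\<in>univ_ci n. (x \<subseteq> y \<and> x \<noteq> y) \<longleftrightarrow> (w \<subseteq> y \<and> w \<noteq> y)"
  shows "x = w"
proof (rule reduced[OF ci_UM[OF x] ci_UM[OF w]])
  show "\<forall>i<n. cls n (Var i) \<in> x \<longleftrightarrow> cls n (Var i) \<in> w"
    using c by (auto simp: col_def set_eq_iff)
  show "\<forall>y\<in>UM n. (x \<subseteq> y \<and> x \<noteq> y) \<longleftrightarrow> (w \<subseteq> y \<and> w \<noteq> y)"
  proof
    fix y assume y: "y \<in> UM n"
    show "(x \<subseteq> y \<and> x \<noteq> y) \<longleftrightarrow> (w \<subseteq> y \<and> w \<noteq> y)"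
    proof
      assume "x \<subseteq> y \<and> x \<noteq> y"
      then have "y \<in> univ_ci n" using ci_up[OF x y] by blast
      then show "w \<subseteq> y \<and> w \<noteq> y" using s \<open>x \<subseteq> y \<and> x \<noteq> y\<close> by blast
    next
      assume "w \<subseteq> y \<and> w \<noteq> y"
      then have "y \<in> univ_ci n" using ci_up[OF w y] by blast
      then show "x \<subseteq> y \<and> x \<noteq> y" using s \<open>w \<subseteq> y \<and> w \<noteq> y\<close> by blast
    qed
  qed
qed

lemma ci_card_less:
  assumes x: "x \<in> univ_ci n" and y: "y \<in> univ_ci n" and cc: "col n x \<subset> col n y"
  shows "n - card (col n y) < n - card (col n x)"
proof -
  have "card (col n x) < card (col n y)" using psubset_card_mono[OF col_fin cc] .
  then show ?thesis using col_card[of n y] by linarith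
qed

lemma finite_ci: "finite (univ_ci n)"
proof -
  have "finite {x\<in>univ_ci n. n - card (col n x) < m}" for m
  proof (induction m)
    case 0 then show ?case by simp
  next
    case (Suc m)
    let ?S = "{x\<in>univ_ci n. n - card (col n x) < Suc m}"
    let ?T = "{x\<in>univ_ci n. n - card (col n x) < m}"
    define g where "g = (\<lambda>x. (col n x, {y\<in>univ_ci n. x \<subseteq> y \<and> x \<noteq> y}))"
    have "g ` ?S \<subseteq> Pow {..<n} \<times> Pow ?T"
    proof
      fix p assume "p \<in> g ` ?S"
      then obtain x where x: "x \<in> ?S" "p = g x" by blast
      have "{y\<in>univ_ci n. x \<subseteq> y \<and> x \<noteq> y} \<subseteq> ?T"
      proof
        fix y assume y: "y \<in> {y\<in>univ_ci n. x \<subseteq> y \<and> x \<noteq> y}"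
        then have "col n x \<subset> col n y" using ci_col_strict x by blast
        then have "n - card (col n y) < n - card (col n x)" using ci_card_less x y by blast
        then show "y \<in> ?T" using x y by auto
      qed
      then show "p \<in> Pow {..<n} \<times> Pow ?T" unfolding x(2) g_def using col_sub[of n x] by (intro mem_Sigma_iff[THEN iffD2] conjI PowI)
    qed
    moreover have "finite (Pow {..<n} \<times> Pow ?T)"
      by (intro finite_cartesian_product finite_Pow_iff[THEN iffD2] Suc.IH finite_lessThan)
    ultimately have "finite (g ` ?S)" by (rule finite_subset)
    moreover have "inj_on g ?S"
    proof (rule inj_onI)
      fix x w assume xw: "x \<in> ?S" "w \<in> ?S" "g x = g w"
      have "fst (g x) = fst (g w)" using xw(3) by (rule arg_cong)
      then have c: "col n x = col n w" unfolding g_def fst_conv .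
      have "snd (g x) = snd (g w)" using xw(3) by (rule arg_cong)
      then have E: "{y\<in>univ_ci n. x \<subseteq> y \<and> x \<noteq> y} = {y\<in>univ_ci n. w \<subseteq> y \<and> w \<noteq> y}"
        unfolding g_def snd_conv .
      have "(x \<subseteq> y \<and> x \<noteq> y) \<longleftrightarrow> (w \<subseteq> y \<and> w \<noteq> y)" if "y \<in> univ_ci n" for y
        using eqset_imp_iff[OF E, of y] that by simp
      then have S: "\<forall>y\<in>univ_ci n. (x \<subseteq> y \<and> x \<noteq> y) \<longleftrightarrow> (w \<subseteq> y \<and> w \<noteq> y)" by blast
      have xX: "x \<in> univ_ci n" using xw(1) by simp
      have wX: "w \<in> univ_ci n" using xw(2) by simp
      show "x = w" by (rule ci_reduced[OF xX wX c S])
    qed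
    ultimately show ?case by (rule finite_imageD)
  qed
  moreover have "univ_ci n = {x\<in>univ_ci n. n - card (col n x) < Suc n}" by auto
  ultimately show ?thesis by metis
qed

lemma ci_imp:
  assumes x: "x \<in> univ_ci n" and A: "A \<in> Fm n" and B: "B \<in> Fm n"
  shows "cls n (Imp A B) \<in> x \<longleftrightarrow> (\<forall>y\<in>univ_ci n. x \<subseteq> y \<and> cls n A \<in> y \<longrightarrow> cls n B \<in> y)"
proof -
  have "cls n (Imp A B) \<in> x \<longleftrightarrow> (\<forall>y\<in>UM n. x \<subseteq> y \<and> cls n A \<in> y \<longrightarrow> cls n B \<in> y)"
    using truth_imp_U[OF ci_UM[OF x] A B] .
  also have "\<dots> \<longleftrightarrow> (\<forall>y\<in>univ_ci n. x \<subseteq> y \<and> cls n A \<in> y \<longrightarrow> cls n B \<in> y)"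
    using ci_up[OF x] ci_UM by blast
  finally show ?thesis .
qed

lemma fin_list: "finite S \<Longrightarrow> \<exists>xs. set xs = S" using finite_list by blast

lemma psi_exists:
  "x \<in> univ_ci n \<Longrightarrow> \<exists>\<psi>\<in>IFm n. \<forall>y\<in>univ_ci n. cls n \<psi> \<in> y \<longleftrightarrow> \<not> y \<subseteq> x"
proof (induction "n - card (col n x)" arbitrary: x rule: less_induct)
  case less
  note x = less.prems
  let ?X = "univ_ci n"
  obtain q where q: "q < n" "cls n (Var q) \<notin> x" and qs: "\<forall>y\<in>UM n. x \<subseteq> y \<and> x \<noteq> y \<longrightarrow> cls n (Var q) \<in> y"
    using ci_sep[OF x] by blast
  define Yx where "Yx = {y\<in>?X. col n x \<subset> col n y}"
  have "\<forall>y\<in>Yx. \<exists>\<psi>\<in>IFm n. \<forall>z\<in>?X. cls n \<psi> \<in> z \<longleftrightarrow> \<not> z \<subseteq> y"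
  proof
    fix y assume y: "y \<in> Yx"
    then have yX: "y \<in> ?X" and cc: "col n x \<subset> col n y" by (auto simp: Yx_def)
    have "n - card (col n y) < n - card (col n x)" by (rule ci_card_less[OF x yX cc])
    then show "\<exists>\<psi>\<in>IFm n. \<forall>z\<in>?X. cls n \<psi> \<in> z \<longleftrightarrow> \<not> z \<subseteq> y" using less.hyps yX by blast
  qed
  then obtain Psi where Psi: "\<And>y. y \<in> Yx \<Longrightarrow> Psi y \<in> IFm n"
    "\<And>y z. y \<in> Yx \<Longrightarrow> z \<in> ?X \<Longrightarrow> cls n (Psi y) \<in> z \<longleftrightarrow> \<not> z \<subseteq> y"
    by metis
  define Y1 where "Y1 = {y\<in>Yx. \<not> x \<subseteq> y}"
  define Y2 where "Y2 = {y\<in>?X. x \<subseteq> y \<and> x \<noteq> y}"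
  have Y2Yx: "Y2 \<subseteq> Yx" using ci_col_strict[OF x] by (auto simp: Y2_def Yx_def)
  have "finite Y1" using finite_ci[of n] by (rule finite_subset[rotated]) (auto simp: Y1_def Yx_def)
  then obtain l1 where l1: "set l1 = Y1" using fin_list by blast
  have "finite Y2" using finite_ci[of n] by (rule finite_subset[rotated]) (auto simp: Y2_def)
  then obtain l2 where l2: "set l2 = Y2" using fin_list by blast
  obtain vs where vs: "set vs = col n x" using fin_list[OF col_fin] by blast
  define L where "L = map Var vs @ map Psi l1 @ map (\<lambda>y. Imp (Psi y) (Var q)) l2"
  define chi where "chi = conjl L"
  define psi where "psi = Imp chi (Var q)"
  have LI: "set L \<subseteq> IFm n"
    using vs l1 l2 Psi(1) Y2Yx q(1) col_sub[of n x] by (auto simp: L_def Y1_def)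
  then have LF: "set L \<subseteq> Fm n" using IFm_Fm by blast
  have chiI: "chi \<in> IFm n" unfolding chi_def using conjl_IFm[OF LI] .
  have chiF: "chi \<in> Fm n" using IFm_Fm[OF chiI] .
  have psiI: "psi \<in> IFm n" using chiI q(1) by (simp add: psi_def)
  have chi_mem: "cls n chi \<in> w \<longleftrightarrow> (\<forall>i\<in>col n x. cls n (Var i) \<in> w) \<and> (\<forall>y\<in>Y1. cls n (Psi y) \<in> w)
      \<and> (\<forall>y\<in>Y2. cls n (Imp (Psi y) (Var q)) \<in> w)" if w: "w \<in> ?X" for w
  proof -
    have "cls n chi \<in> w \<longleftrightarrow> (\<forall>A\<in>set L. cls n A \<in> w)"
      unfolding chi_def using pf_conjl[OF ci_pf[OF w] LF] .
    also have "\<dots> \<longleftrightarrow> (\<forall>i\<in>col n x. cls n (Var i) \<in> w) \<and> (\<forall>y\<in>Y1. cls n (Psi y) \<in> w)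
      \<and> (\<forall>y\<in>Y2. cls n (Imp (Psi y) (Var q)) \<in> w)"
      unfolding L_def set_append set_map vs l1 l2 ball_Un ball_simps by simp
    finally show ?thesis .
  qed
  have Vq: "Var q \<in> Fm n" using q(1) by simp
  have PsiF: "Psi y \<in> Fm n" if "y \<in> Yx" for y using IFm_Fm[OF Psi(1)[OF that]] .
  have chix: "cls n chi \<in> x"
  proof -
    have "\<forall>i\<in>col n x. cls n (Var i) \<in> x" by (auto simp: col_def)
    moreover have "\<forall>y\<in>Y1. cls n (Psi y) \<in> x" using Psi(2) x by (auto simp: Y1_def)
    moreover have "\<forall>y\<in>Y2. cls n (Imp (Psi y) (Var q)) \<in> x"
    proof
      fix y assume y: "y \<in> Y2"
      then have yYx: "y \<in> Yx" using Y2Yx by blast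
      have yx: "x \<subseteq> y" using y by (simp add: Y2_def)
      show "cls n (Imp (Psi y) (Var q)) \<in> x"
        unfolding ci_imp[OF x PsiF[OF yYx] Vq]
      proof (intro ballI impI)
        fix w assume w: "w \<in> ?X" "x \<subseteq> w \<and> cls n (Psi y) \<in> w"
        then have "\<not> w \<subseteq> y" using Psi(2)[OF yYx w(1)] by blast
        then have "w \<noteq> x" using yx by blast
        then show "cls n (Var q) \<in> w" using qs ci_UM[OF w(1)] w(2) by blast
      qed
    qed
    ultimately show ?thesis using chi_mem[OF x] by blast
  qed
  have "\<forall>y\<in>?X. cls n psi \<in> y \<longleftrightarrow> \<not> y \<subseteq> x"
  proof
    fix y assume yX: "y \<in> ?X"
    show "cls n psi \<in> y \<longleftrightarrow> \<not> y \<subseteq> x"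
    proof
      assume m: "cls n psi \<in> y"
      show "\<not> y \<subseteq> x"
      proof
        assume "y \<subseteq> x"
        have "\<forall>w\<in>?X. y \<subseteq> w \<and> cls n chi \<in> w \<longrightarrow> cls n (Var q) \<in> w"
          using m unfolding psi_def ci_imp[OF yX chiF Vq] .
        then have "cls n (Var q) \<in> x" using x \<open>y \<subseteq> x\<close> chix by blast
        then show False using q(2) by blast
      qed
    next
      assume nyx: "\<not> y \<subseteq> x"
      show "cls n psi \<in> y"
        unfolding psi_def ci_imp[OF yX chiF Vq]
      proof (intro ballI impI)
        fix w assume w: "w \<in> ?X" "y \<subseteq> w \<and> cls n chi \<in> w"
        show "cls n (Var q) \<in> w"
        proof (rule ccontr)
          assume nq: "cls n (Var q) \<notin> w"
          have cm: "(\<forall>i\<in>col n x. cls n (Var i) \<in> w)" "(\<forall>y\<in>Y1. cls n (Psi y) \<in> w)"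
            "(\<forall>y\<in>Y2. cls n (Imp (Psi y) (Var q)) \<in> w)" using chi_mem[OF w(1)] w(2) by blast+
          have sub: "col n x \<subseteq> col n w" using cm(1) by (auto simp: col_def)
          have qw: "q \<notin> col n w" using nq by (simp add: col_def)
          have qx: "q \<notin> col n x" using q(2) by (simp add: col_def)
          show False
          proof (cases "col n x = col n w")
            case False
            then have wYx: "w \<in> Yx" using sub w(1) by (auto simp: Yx_def)
            show False
            proof (cases "x \<subseteq> w")
              case True
              then have "x \<noteq> w" using False by blast
              then have "cls n (Var q) \<in> w" using qs ci_UM[OF w(1)] True by blast
              then show False using nq by blast
            next
              case False
              then have "w \<in> Y1" using wYx by (simp add: Y1_def)
              then have "cls n (Psi w) \<in> w" using cm(2) by blast
              then show False using Psi(2)[OF wYx w(1)] by blast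
            qed
          next
            case True
            note cxw = True
            have "\<forall>z\<in>?X. (x \<subseteq> z \<and> x \<noteq> z) \<longleftrightarrow> (w \<subseteq> z \<and> w \<noteq> z)"
            proof
              fix z assume zX: "z \<in> ?X"
              show "(x \<subseteq> z \<and> x \<noteq> z) \<longleftrightarrow> (w \<subseteq> z \<and> w \<noteq> z)"
              proof
                assume xz: "x \<subseteq> z \<and> x \<noteq> z"
                then have "z \<in> Y2" using zX by (simp add: Y2_def)
                then have zYx: "z \<in> Yx" and "cls n (Imp (Psi z) (Var q)) \<in> w" using cm(3) Y2Yx by blast+
                then have "cls n (Psi z) \<notin> w"
                  using pf_mp[OF ci_pf[OF w(1)] PsiF[OF zYx] Vq] nq by blast
                then have wz: "w \<subseteq> z" using Psi(2)[OF zYx w(1)] by blast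
                have "col n x \<subset> col n z" using ci_col_strict[OF x zX] xz by blast
                then have "w \<noteq> z" using cxw by blast
                then show "w \<subseteq> z \<and> w \<noteq> z" using wz by blast
              next
                assume wz: "w \<subseteq> z \<and> w \<noteq> z"
                then have cc: "col n w \<subset> col n z" using ci_col_strict[OF w(1) zX] by blast
                then have zYx: "z \<in> Yx" using cxw zX by (simp add: Yx_def)
                have "cls n chi \<in> z" using w(2) wz by blast
                then have "\<forall>y\<in>Y1. cls n (Psi y) \<in> z" using chi_mem[OF zX] by blast
                have "x \<subseteq> z"
                proof (rule ccontr)
                  assume "\<not> x \<subseteq> z"
                  then have "z \<in> Y1" using zYx by (simp add: Y1_def)
                  then have "cls n (Psi z) \<in> z" using \<open>\<forall>y\<in>Y1. cls n (Psi y) \<in> z\<close> by blast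
                  then show False using Psi(2)[OF zYx zX] by blast
                qed
                moreover have "x \<noteq> z" using cc cxw by blast
                ultimately show "x \<subseteq> z \<and> x \<noteq> z" by blast
              qed
            qed
            then have "x = w" using ci_reduced[OF x w(1) cxw] by blast
            then show False using nyx w(2) by blast
          qed
        qed
      qed
    qed
  qed
  then show ?case using psiI by blast
qed

lemma h_inj:
  assumes A: "A \<in> IFm n" and B: "B \<in> IFm n" and np: "\<not> prv (Imp A B)"
  shows "\<exists>x\<in>univ_ci n. cls n A \<in> x \<and> cls n B \<notin> x"
proof -
  obtain x where x: "x \<in> UM n" "cls n A \<in> x" "cls n B \<notin> x" using countermodel[OF A B np] by blast
  obtain t where t: "t \<in> SP n" "x \<subseteq> t" "cls n B \<notin> t" using claimB[OF x(1) B x(3)] by blast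
  have "cls n A \<in> t" using t x by blast
  then have "cls n A \<in> f0 n t" "cls n B \<notin> f0 n t" using f0_mem[OF t(1)] A B t(3) by blast+
  then show ?thesis using f0_ci[OF t(1)] by blast
qed

theorem corollary3p17:
  fixes n :: nat
  shows "\<exists>h :: fm \<Rightarrow> fm set set set.
    (\<forall>A\<in>IFm n. h A \<in> upsets (univ_ci n) (\<subseteq>)) \<and>
    (\<forall>U\<in>upsets (univ_ci n) (\<subseteq>). \<exists>A\<in>IFm n. h A = U) \<and>
    (\<forall>A\<in>IFm n. \<forall>B\<in>IFm n. h A = h B \<longleftrightarrow> ipc_equiv A B) \<and>
    (\<forall>A\<in>IFm n. \<forall>B\<in>IFm n. h (And A B) = h A \<inter> h B) \<and>
    (\<forall>A\<in>IFm n. \<forall>B\<in>IFm n. h (Imp A B) = up_imp (univ_ci n) (\<subseteq>) (h A) (h B))"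
proof -
  let ?X = "univ_ci n"
  define h where "h = (\<lambda>A. {x\<in>?X. cls n A \<in> x})"
  have 1: "\<forall>A\<in>IFm n. h A \<in> upsets ?X (\<subseteq>)"
    by (auto simp: h_def upsets_def)
  have 2: "\<forall>U\<in>upsets ?X (\<subseteq>). \<exists>A\<in>IFm n. h A = U"
  proof
    fix U assume U: "U \<in> upsets ?X (\<subseteq>)"
    then have UX: "U \<subseteq> ?X" and Uup: "\<forall>x\<in>U. \<forall>y\<in>?X. x \<subseteq> y \<longrightarrow> y \<in> U"
      by (auto simp: upsets_def)
    have "\<forall>x\<in>?X. \<exists>\<psi>\<in>IFm n. \<forall>y\<in>?X. cls n \<psi> \<in> y \<longleftrightarrow> \<not> y \<subseteq> x"
      using psi_exists by blast
    then obtain Psi where Psi: "\<And>x. x \<in> ?X \<Longrightarrow> Psi x \<in> IFm n"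
      "\<And>x y. x \<in> ?X \<Longrightarrow> y \<in> ?X \<Longrightarrow> cls n (Psi x) \<in> y \<longleftrightarrow> \<not> y \<subseteq> x"
      by metis
    have "finite (?X - U)" using finite_ci[of n] by blast
    then obtain l where l: "set l = ?X - U" using fin_list by blast
    define A where "A = conjl (map Psi l)"
    have LI: "set (map Psi l) \<subseteq> IFm n" using l Psi(1) by auto
    then have AI: "A \<in> IFm n" unfolding A_def by (rule conjl_IFm)
    have LF: "set (map Psi l) \<subseteq> Fm n" using LI IFm_Fm by blast
    have "h A = U"
    proof (rule set_eqI)
      fix y
      show "y \<in> h A \<longleftrightarrow> y \<in> U"
      proof (cases "y \<in> ?X")
        case False then show ?thesis using UX by (auto simp: h_def)
      next
        case True
        have "y \<in> h A \<longleftrightarrow> (\<forall>B\<in>set (map Psi l). cls n B \<in> y)"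
          unfolding h_def A_def using pf_conjl[OF ci_pf[OF True] LF] True by simp
        also have "\<dots> \<longleftrightarrow> (\<forall>x\<in>?X - U. \<not> y \<subseteq> x)"
          using Psi(2) True l by auto
        also have "\<dots> \<longleftrightarrow> y \<in> U"
          using Uup True by blast
        finally show ?thesis .
      qed
    qed
    then show "\<exists>A\<in>IFm n. h A = U" using AI by blast
  qed
  have 3: "\<forall>A\<in>IFm n. \<forall>B\<in>IFm n. h A = h B \<longleftrightarrow> ipc_equiv A B"
  proof (intro ballI iffI)
    fix A B assume AB: "A \<in> IFm n" "B \<in> IFm n" and e: "ipc_equiv A B"
    then have "cls n A = cls n B" using cls_eq IFm_Fm by blast
    then show "h A = h B" by (simp add: h_def)
  next
    fix A B assume AB: "A \<in> IFm n" "B \<in> IFm n" and e: "h A = h B"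
    have "prv (Imp A B)"
    proof (rule ccontr)
      assume "\<not> prv (Imp A B)"
      then obtain x where "x \<in> ?X" "cls n A \<in> x" "cls n B \<notin> x" using h_inj AB by blast
      then have "x \<in> h A" "x \<notin> h B" by (auto simp: h_def)
      then show False using e by blast
    qed
    moreover have "prv (Imp B A)"
    proof (rule ccontr)
      assume "\<not> prv (Imp B A)"
      then obtain x where "x \<in> ?X" "cls n B \<in> x" "cls n A \<notin> x" using h_inj AB by blast
      then have "x \<in> h B" "x \<notin> h A" by (auto simp: h_def)
      then show False using e by blast
    qed
    ultimately show "ipc_equiv A B" by (simp add: ipc_equiv_def)
  qed
  have 4: "\<forall>A\<in>IFm n. \<forall>B\<in>IFm n. h (And A B) = h A \<inter> h B"
  proof (intro ballI set_eqI)
    fix A B y assume AB: "A \<in> IFm n" "B \<in> IFm n"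
    show "y \<in> h (And A B) \<longleftrightarrow> y \<in> h A \<inter> h B"
    proof (cases "y \<in> ?X")
      case True
      then show ?thesis using pf_and[OF ci_pf[OF True] IFm_Fm[OF AB(1)] IFm_Fm[OF AB(2)]]
        by (simp add: h_def)
    qed (simp add: h_def)
  qed
  have 5: "\<forall>A\<in>IFm n. \<forall>B\<in>IFm n. h (Imp A B) = up_imp ?X (\<subseteq>) (h A) (h B)"
  proof (intro ballI set_eqI)
    fix A B y assume AB: "A \<in> IFm n" "B \<in> IFm n"
    show "y \<in> h (Imp A B) \<longleftrightarrow> y \<in> up_imp ?X (\<subseteq>) (h A) (h B)"
    proof (cases "y \<in> ?X")
      case True
      then show ?thesis using ci_imp[OF True IFm_Fm[OF AB(1)] IFm_Fm[OF AB(2)]]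
        by (auto simp: h_def up_imp_def)
    qed (simp add: h_def up_imp_def)
  qed
  show ?thesis using 1 2 3 4 5 by blast
qed

end
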